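(* Let $N\ge1$, let $M=\prod_{i=1}^N M_i\subset\mathbb{R}^N$ be compact (each $M_i\subset\mathbb{R}$), and suppose $M\subset U=\prod_{i=1}^N U_i\subset\mathbb{C}^N$ with each $U_i$ an open domain of $\mathbb{C}$ symmetric about the real axis. Let $f:M\to\mathbb{R}$ be continuous. Then for every $\varepsilon>0$ there exist an integer $h\ge1$ and a CauchyNet $N_{\boldsymbol\theta,h}$ of hidden width $h$, with parameters $\boldsymbol\theta=(\mathbf{B},\mathbf{c})$, $\mathbf{B}\in\mathbb{C}^{h\times N}$, $\mathbf{c}\in\mathbb{C}^h$, such that $|f(\mathbf{x})-N_{\boldsymbol\theta,h}(\mathbf{x})|<\varepsilon$ for all $\mathbf{x}=(x_1,\dots,x_N)^{\mathrm T}\in M$.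
   Context: A CauchyNet with hidden width $h$ and parameters $\mathbf{B}=(b_{k,i})\in\mathbb{C}^{h\times N}$, $\mathbf{c}=(c_1,\dots,c_h)\in\mathbb{C}^h$ is the (complex-valued) function on $M$ given by $N_{\boldsymbol\theta,h}(\mathbf{x})=\sum_{k=1}^{h}c_k\prod_{i=1}^{N}(b_{k,i}-x_i)^{-1}$, where the parameters are such that no factor $b_{k,i}-x_i$ vanishes on $M$. (In the architecture each hidden neuron computes the Cauchy activation $\prod_i z_i^{-1}$ of the complex-shifted input, and the output is the $\mathbf{c}$-weighted sum of the hidden activations.) *)

theory Defs
  imports "HOL-Analysis.Analysis"
begin

definition cauchynet :: "nat \<Rightarrow> (nat \<Rightarrow> 'n::finite \<Rightarrow> complex) \<Rightarrow> (nat \<Rightarrow> complex)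
    \<Rightarrow> real^'n \<Rightarrow> complex" where
  "cauchynet h B c x = (\<Sum>k<h. c k * (\<Prod>i\<in>UNIV. inverse (B k i - complex_of_real (x $ i))))"

definition cauchynet_admissible :: "nat \<Rightarrow> (nat \<Rightarrow> 'n::finite \<Rightarrow> complex) \<Rightarrow> (real^'n) set \<Rightarrow> bool" where
  "cauchynet_admissible h B M \<longleftrightarrow>
     (\<forall>x\<in>M. \<forall>k<h. \<forall>i. B k i - complex_of_real (x $ i) \<noteq> 0)"

end

theory Submission
  imports Defs
begin

definition T :: "('n::finite \<Rightarrow> complex) \<Rightarrow> real^'n \<Rightarrow> complex" where
  "T b x = (\<Prod>i\<in>UNIV. inverse (b i - complex_of_real (x $ i)))"

definition goodp :: "('n::finite \<Rightarrow> complex) \<Rightarrow> bool" where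
  "goodp b \<longleftrightarrow> (\<forall>i. Im (b i) \<noteq> 0)"

definition appr :: "(real^'n::finite) set \<Rightarrow> (real^'n \<Rightarrow> complex) \<Rightarrow> bool" where
  "appr M g \<longleftrightarrow> (\<forall>e>0. \<exists>h B c. (\<forall>k<h. goodp (B k)) \<and>
      (\<forall>x\<in>M. cmod (g x - cauchynet h B c x) < e))"

lemma cauchynet_T: "cauchynet h B c x = (\<Sum>k<h. c k * T (B k) x)"
  by (simp add: cauchynet_def T_def)

lemma good_nz: "goodp b \<Longrightarrow> b i - complex_of_real r \<noteq> 0"
  unfolding goodp_def by (metis Im_complex_of_real cancel_comm_monoid_add_class.diff_cancel
      diff_zero minus_complex.sel(2))

lemma appr_T: "goodp b \<Longrightarrow> appr M (\<lambda>x. a * T b x)"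
  unfolding appr_def
  apply (intro allI impI)
  apply (rule exI[of _ 1], rule exI[of _ "\<lambda>_. b"], rule exI[of _ "\<lambda>_. a"])
  by (simp add: cauchynet_T)

lemma appr_zero: "appr M (\<lambda>x. 0)"
  unfolding appr_def
  apply (intro allI impI)
  apply (rule exI[of _ 0], rule exI[of _ "\<lambda>_ _. 0"], rule exI[of _ "\<lambda>_. 0"])
  by (simp add: cauchynet_def)

lemma cauchynet_concat:
  "cauchynet (h1+h2) (\<lambda>k. if k<h1 then B1 k else B2 (k-h1)) (\<lambda>k. if k<h1 then c1 k else c2 (k-h1)) x
   = cauchynet h1 B1 c1 x + cauchynet h2 B2 c2 x"
proof (induction h2)
  case 0
  then show ?case by (auto simp: cauchynet_def intro!: sum.cong)
next
  case (Suc h2)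
  then show ?case by (simp add: cauchynet_def)
qed

lemma appr_add:
  assumes "appr M f" "appr M g" shows "appr M (\<lambda>x. f x + g x)"
  unfolding appr_def
proof (intro allI impI)
  fix e :: real assume e: "e > 0"
  obtain h1 B1 c1 where 1: "\<forall>k<h1. goodp (B1 k)" "\<forall>x\<in>M. cmod (f x - cauchynet h1 B1 c1 x) < e/2"
    using assms(1) e unfolding appr_def by (meson half_gt_zero)
  obtain h2 B2 c2 where 2: "\<forall>k<h2. goodp (B2 k)" "\<forall>x\<in>M. cmod (g x - cauchynet h2 B2 c2 x) < e/2"
    using assms(2) e unfolding appr_def by (meson half_gt_zero)
  show "\<exists>h B c. (\<forall>k<h. goodp (B k)) \<and> (\<forall>x\<in>M. cmod (f x + g x - cauchynet h B c x) < e)"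
  proof (intro exI conjI ballI allI impI)
    fix k assume "k < h1 + h2"
    then show "goodp (if k<h1 then B1 k else B2 (k-h1))" using 1 2 by auto
  next
    fix x assume x: "x \<in> M"
    have "cmod (f x + g x - (cauchynet h1 B1 c1 x + cauchynet h2 B2 c2 x))
        \<le> cmod (f x - cauchynet h1 B1 c1 x) + cmod (g x - cauchynet h2 B2 c2 x)"
      by (metis add_diff_add norm_triangle_ineq)
    also have "\<dots> < e" using 1 2 x by fastforce
    finally show "cmod (f x + g x - cauchynet (h1+h2) (\<lambda>k. if k<h1 then B1 k else B2 (k-h1))
        (\<lambda>k. if k<h1 then c1 k else c2 (k-h1)) x) < e"
      by (simp only: cauchynet_concat)
  qed
qed

lemma appr_scale:
  assumes "appr M g" shows "appr M (\<lambda>x. a * g x)"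
  unfolding appr_def
proof (intro allI impI)
  fix e :: real assume e: "e > 0"
  have e': "e / (cmod a + 1) > 0" using e by (smt (verit) norm_ge_zero divide_pos_pos)
  obtain h B c where 1: "\<forall>k<h. goodp (B k)" "\<forall>x\<in>M. cmod (g x - cauchynet h B c x) < e / (cmod a + 1)"
    using assms e' unfolding appr_def by meson
  show "\<exists>h B c. (\<forall>k<h. goodp (B k)) \<and> (\<forall>x\<in>M. cmod (a * g x - cauchynet h B c x) < e)"
  proof (intro exI conjI ballI)
    show "\<forall>k<h. goodp (B k)" using 1 by auto
  next
    fix x assume x: "x \<in> M"
    have eq: "cauchynet h B (\<lambda>k. a * c k) x = a * cauchynet h B c x"
      by (simp add: cauchynet_def sum_distrib_left mult.assoc)
    have "cmod (a * g x - a * cauchynet h B c x) = cmod a * cmod (g x - cauchynet h B c x)"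
      by (metis norm_mult right_diff_distrib)
    also have "\<dots> \<le> cmod a * (e / (cmod a + 1))"
      using 1 x by (intro mult_left_mono) auto
    also have "\<dots> < e"
    proof -
      have p: "0 < cmod a + 1" by (simp add: add_nonneg_pos)
      have "cmod a * (e / (cmod a + 1)) = e * (cmod a / (cmod a + 1))" by simp
      also have "\<dots> < e * 1" using e p by (intro mult_strict_left_mono) auto
      finally show ?thesis by simp
    qed
    finally show "cmod (a * g x - cauchynet h B (\<lambda>k. a * c k) x) < e" by (simp add: eq)
  qed
qed

lemma appr_sum:
  assumes "finite A" "\<And>j. j \<in> A \<Longrightarrow> appr M (g j)"
  shows "appr M (\<lambda>x. \<Sum>j\<in>A. g j x)"
  using assms
proof (induction A rule: finite_induct)
  case empty
  then show ?case by (simp add: appr_zero)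
next
  case (insert a A)
  then show ?case by (simp add: appr_add)
qed

lemma appr_limit:
  assumes "\<And>e. e > 0 \<Longrightarrow> \<exists>g'. appr M g' \<and> (\<forall>x\<in>M. cmod (g x - g' x) < e)"
  shows "appr M g"
  unfolding appr_def
proof (intro allI impI)
  fix e :: real assume e: "e > 0"
  obtain g' where g': "appr M g'" "\<forall>x\<in>M. cmod (g x - g' x) < e/2"
    using assms[of "e/2"] e by auto
  obtain h B c where 1: "\<forall>k<h. goodp (B k)" "\<forall>x\<in>M. cmod (g' x - cauchynet h B c x) < e/2"
    using g'(1) e unfolding appr_def by (meson half_gt_zero)
  show "\<exists>h B c. (\<forall>k<h. goodp (B k)) \<and> (\<forall>x\<in>M. cmod (g x - cauchynet h B c x) < e)"
  proof (intro exI conjI ballI)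
    show "\<forall>k<h. goodp (B k)" using 1 by auto
  next
    fix x assume x: "x \<in> M"
    have "cmod (g x - cauchynet h B c x) \<le> cmod (g x - g' x) + cmod (g' x - cauchynet h B c x)"
      using norm_triangle_ineq[of "g x - g' x" "g' x - cauchynet h B c x"] by simp
    also have "\<dots> < e" using 1 g' x by fastforce
    finally show "cmod (g x - cauchynet h B c x) < e" .
  qed
qed


lemma cmod_ge_Im: "goodp b \<Longrightarrow> \<bar>Im (b i)\<bar> \<le> cmod (b i - complex_of_real r)"
  using abs_Im_le_cmod[of "b i - complex_of_real r"] by simp

lemma T_norm: assumes "goodp b" shows "cmod (T b x) \<le> (\<Prod>i\<in>UNIV. 1 / \<bar>Im (b i)\<bar>)"
proof -
  have "cmod (T b x) = (\<Prod>i\<in>UNIV. cmod (inverse (b i - complex_of_real (x $ i))))"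
    by (simp add: T_def prod_norm)
  also have "\<dots> \<le> (\<Prod>i\<in>UNIV. 1 / \<bar>Im (b i)\<bar>)"
  proof (rule prod_mono, safe)
    fix i
    have p: "\<bar>Im (b i)\<bar> > 0" using assms by (simp add: goodp_def)
    show "0 \<le> cmod (inverse (b i - complex_of_real (x $ i)))" by simp
    show "cmod (inverse (b i - complex_of_real (x $ i))) \<le> 1 / \<bar>Im (b i)\<bar>"
      using le_imp_inverse_le[OF cmod_ge_Im[OF assms, of i "x $ i"] p]
      by (simp add: norm_inverse divide_inverse)
  qed
  finally show ?thesis .
qed

lemma factor_diff:
  fixes u :: complex and m s :: real
  assumes m: "m > 0" and u: "m \<le> cmod u" and v: "m \<le> cmod (u + of_real s)"
  shows "cmod (of_real m * inverse u - of_real m * inverse (u + of_real s)) \<le> \<bar>s\<bar> / m"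
proof -
  have u0: "u \<noteq> 0" and v0: "u + of_real s \<noteq> 0" using m u v by auto
  have "of_real m * inverse u - of_real m * inverse (u + of_real s)
      = of_real m * of_real s / (u * (u + of_real s))"
    using u0 v0 by (simp add: field_simps)
  then have "cmod (of_real m * inverse u - of_real m * inverse (u + of_real s))
      = m * \<bar>s\<bar> / (cmod u * cmod (u + of_real s))"
    using m by (simp add: norm_mult norm_divide)
  also have "\<dots> \<le> m * \<bar>s\<bar> / (m * m)"
  proof -
    have "cmod u > 0" "cmod (u + of_real s) > 0" using u0 v0 by auto
    then show ?thesis using m u v by (intro divide_left_mono mult_mono) auto
  qed
  also have "\<dots> = \<bar>s\<bar> / m" using m by simp
  finally show ?thesis .
qed

lemma T_shift:
  assumes "goodp b"
  shows "cmod (T b x - T (\<lambda>i. b i + of_real s) x) * (\<Prod>i\<in>UNIV. \<bar>Im (b i)\<bar>)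
     \<le> \<bar>s\<bar> * (\<Sum>i\<in>UNIV. 1 / \<bar>Im (b i)\<bar>)"
proof -
  define m where "m i = \<bar>Im (b i)\<bar>" for i
  have m: "m i > 0" for i using assms by (simp add: goodp_def m_def)
  define z where "z i = of_real (m i) * inverse (b i - complex_of_real (x $ i))" for i
  define w where "w i = of_real (m i) * inverse (b i + of_real s - complex_of_real (x $ i))" for i
  have u: "m i \<le> cmod (b i - complex_of_real (x $ i))" for i
    using cmod_ge_Im[OF assms] by (simp add: m_def)
  have v: "m i \<le> cmod (b i - complex_of_real (x $ i) + of_real s)" for i
  proof -
    have "Im (b i - complex_of_real (x $ i) + of_real s) = Im (b i)" by simp
    then show ?thesis using abs_Im_le_cmod[of "b i - complex_of_real (x $ i) + of_real s"]
      by (simp add: m_def)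
  qed
  have zn: "norm (z i) \<le> 1" for i
    using u[of i] m[of i] by (simp add: z_def norm_divide divide_inverse[symmetric] divide_le_eq_1)
  have wn: "norm (w i) \<le> 1" for i
  proof -
    have e: "cmod (b i + of_real s - complex_of_real (x $ i)) = cmod (b i - complex_of_real (x $ i) + of_real s)"
      by (simp add: algebra_simps)
    have "m i \<le> cmod (b i + of_real s - complex_of_real (x $ i))" using v[of i] e by simp
    then show ?thesis
      using m[of i] by (simp add: w_def norm_divide divide_inverse[symmetric] divide_le_eq_1)
  qed
  have "prod z UNIV - prod w UNIV = (\<Prod>i\<in>UNIV. of_real (m i)) * (T b x - T (\<lambda>i. b i + of_real s) x)"
    by (simp add: z_def w_def T_def prod.distrib right_diff_distrib)
  moreover have "cmod (\<Prod>i\<in>UNIV. complex_of_real (m i)) = (\<Prod>i\<in>UNIV. m i)"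
    unfolding prod_norm[symmetric] by (rule prod.cong) (use m in \<open>auto intro: abs_of_pos\<close>)
  ultimately have "cmod (T b x - T (\<lambda>i. b i + of_real s) x) * (\<Prod>i\<in>UNIV. m i)
      = norm (prod z UNIV - prod w UNIV)"
    by (simp add: norm_mult)
  also have "\<dots> \<le> (\<Sum>i\<in>UNIV. norm (z i - w i))"
    by (rule norm_prod_diff) (use zn wn in auto)
  also have "\<dots> \<le> (\<Sum>i\<in>UNIV. \<bar>s\<bar> / m i)"
  proof (rule sum_mono)
    fix i
    have e: "b i + of_real s - complex_of_real (x $ i) = b i - complex_of_real (x $ i) + of_real s"
      by simp
    show "norm (z i - w i) \<le> \<bar>s\<bar> / m i"
      unfolding z_def w_def e using factor_diff[OF m u v, of i] by simp
  qed
  also have "\<dots> = \<bar>s\<bar> * (\<Sum>i\<in>UNIV. 1 / m i)" by (simp add: sum_distrib_left)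
  finally show ?thesis by (simp add: m_def)
qed


lemma factor_pf:
  fixes b b' y :: complex
  assumes "b - y \<noteq> 0" "b' - y \<noteq> 0" "b \<noteq> b'"
  shows "inverse (b - y) * inverse (b' - y)
    = inverse (b' - b) * inverse (b - y) + (- inverse (b' - b)) * inverse (b' - y)"
proof -
  have n: "b' - b \<noteq> 0" using assms by simp
  have "inverse (b - y) - inverse (b' - y) = - (inverse (b - y) * ((b - y) - (b' - y)) * inverse (b' - y))"
    using assms by (intro inverse_diff_inverse) auto
  also have "\<dots> = (b' - b) * (inverse (b - y) * inverse (b' - y))" by (simp add: algebra_simps)
  finally have "inverse (b' - b) * (inverse (b - y) - inverse (b' - y)) = inverse (b - y) * inverse (b' - y)"
    using n by simp
  then show ?thesis by (simp add: algebra_simps)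
qed

lemma appr_prod_distinct:
  assumes gb: "goodp b" and gb': "goodp b'" and d: "\<And>i. b i \<noteq> b' i"
  shows "appr M (\<lambda>x. T b x * T b' x)"
proof -
  define d where "d i = inverse (b' i - b i)" for i
  define mix where "mix X = (\<lambda>i. if i \<in> X then b i else b' i)" for X
  define a where "a X = (\<Prod>i\<in>X. d i) * (\<Prod>i\<in>UNIV - X. - d i)" for X
  have eq: "T b x * T b' x = (\<Sum>X\<in>Pow UNIV. a X * T (mix X) x)" for x
  proof -
    let ?u = "\<lambda>i. inverse (b i - complex_of_real (x $ i))"
    let ?v = "\<lambda>i. inverse (b' i - complex_of_real (x $ i))"
    have "T b x * T b' x = (\<Prod>i\<in>UNIV. ?u i * ?v i)"
      by (simp add: T_def prod.distrib)
    also have "\<dots> = (\<Prod>i\<in>UNIV. d i * ?u i + (- d i) * ?v i)"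
      unfolding d_def by (rule prod.cong[OF refl], rule factor_pf)
        (use good_nz[OF gb] good_nz[OF gb'] d in auto)
    also have "\<dots> = (\<Sum>X\<in>Pow UNIV. (\<Prod>i\<in>X. d i * ?u i) * (\<Prod>i\<in>UNIV - X. (- d i) * ?v i))"
      by (rule prod_add) simp
    also have "\<dots> = (\<Sum>X\<in>Pow UNIV. a X * T (mix X) x)"
    proof (rule sum.cong[OF refl])
      fix X :: "'a set"
      have "T (mix X) x = (\<Prod>i\<in>UNIV - X. inverse (mix X i - complex_of_real (x $ i))) *
          (\<Prod>i\<in>X. inverse (mix X i - complex_of_real (x $ i)))"
        unfolding T_def by (rule prod.subset_diff) auto
      also have "\<dots> = (\<Prod>i\<in>UNIV - X. ?v i) * (\<Prod>i\<in>X. ?u i)"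
        by (intro arg_cong2[where f="(*)"] prod.cong) (auto simp: mix_def)
      finally have "T (mix X) x = (\<Prod>i\<in>UNIV - X. ?v i) * (\<Prod>i\<in>X. ?u i)" .
      moreover have "(\<Prod>i\<in>X. d i * ?u i) = (\<Prod>i\<in>X. d i) * (\<Prod>i\<in>X. ?u i)"
        by (rule prod.distrib)
      moreover have "(\<Prod>i\<in>UNIV - X. (- d i) * ?v i) = (\<Prod>i\<in>UNIV - X. - d i) * (\<Prod>i\<in>UNIV - X. ?v i)"
        by (rule prod.distrib)
      ultimately show "(\<Prod>i\<in>X. d i * ?u i) * (\<Prod>i\<in>UNIV - X. (- d i) * ?v i) = a X * T (mix X) x"
        by (simp only: a_def mult_ac)
    qed
    finally show ?thesis .
  qed
  have "appr M (\<lambda>x. \<Sum>X\<in>Pow UNIV. a X * T (mix X) x)"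
  proof (rule appr_sum)
    fix X :: "'a set"
    have "goodp (mix X)" using gb gb' by (auto simp: goodp_def mix_def)
    then show "appr M (\<lambda>x. a X * T (mix X) x)" by (rule appr_T)
  qed simp
  then show ?thesis by (simp add: eq)
qed

lemma appr_prodT:
  assumes gb: "goodp b" and gb': "goodp b'"
  shows "appr M (\<lambda>x. T b x * T b' x)"
proof (rule appr_limit)
  fix e :: real assume e: "e > 0"
  define K where "K = (\<Prod>i\<in>UNIV. 1 / \<bar>Im (b i)\<bar>)"
  have K0: "K \<ge> 0" by (simp add: K_def prod_nonneg)
  define P where "P = (\<Prod>i\<in>UNIV. \<bar>Im (b' i)\<bar>)"
  have P0: "P > 0" using gb' by (simp add: P_def goodp_def prod_pos)
  define C where "C = (\<Sum>i\<in>UNIV. 1 / \<bar>Im (b' i)\<bar>) / P"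
  have C0: "C \<ge> 0" using P0 by (simp add: C_def sum_nonneg)
  define \<delta> where "\<delta> = e / (K + 1)"
  have \<delta>0: "\<delta> > 0" using e K0 by (simp add: \<delta>_def)
  define s0 where "s0 = \<delta> / (C + 1)"
  have s00: "s0 > 0" using \<delta>0 C0 by (simp add: s0_def)
  define Bad where "Bad = range (\<lambda>i. Re (b i) - Re (b' i))"
  have "infinite ({0<..<s0} - Bad)"
    using infinite_Ioo[OF s00] by (simp add: Bad_def)
  then obtain s where s: "s \<in> {0<..<s0}" "s \<notin> Bad"
    by (metis Diff_iff finite.emptyI infinite_imp_nonempty ex_in_conv)
  define b'' where "b'' = (\<lambda>i. b' i + of_real s)"
  have gb'': "goodp b''" using gb' by (simp add: goodp_def b''_def)
  have dist: "b i \<noteq> b'' i" for i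
  proof
    assume "b i = b'' i"
    then have "Re (b i) = Re (b' i) + s" by (simp add: b''_def)
    then have "s = Re (b i) - Re (b' i)" by simp
    then have "s \<in> Bad" unfolding Bad_def by auto
    then show False using s by simp
  qed
  show "\<exists>g'. appr M g' \<and> (\<forall>x\<in>M. cmod (T b x * T b' x - g' x) < e)"
  proof (intro exI conjI ballI)
    show "appr M (\<lambda>x. T b x * T b'' x)" by (rule appr_prod_distinct[OF gb gb'' dist])
  next
    fix x
    have CP: "C * P = (\<Sum>i\<in>UNIV. 1 / \<bar>Im (b' i)\<bar>)" using P0 by (simp add: C_def)
    have "cmod (T b' x - T b'' x) * P \<le> \<bar>s\<bar> * (C * P)"
      unfolding CP unfolding P_def b''_def by (rule T_shift[OF gb'])
    then have "cmod (T b' x - T b'' x) \<le> \<bar>s\<bar> * C" using P0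
      by (metis mult.assoc mult_le_cancel_right_pos)
    also have "\<dots> \<le> s0 * C" using s C0 by (intro mult_right_mono) auto
    also have "\<dots> < \<delta>" using \<delta>0 C0 by (simp add: s0_def field_simps)
    finally have t: "cmod (T b' x - T b'' x) < \<delta>" .
    have "cmod (T b x * T b' x - T b x * T b'' x) = cmod (T b x) * cmod (T b' x - T b'' x)"
      by (metis norm_mult right_diff_distrib)
    also have "\<dots> \<le> K * \<delta>"
      using T_norm[OF gb, of x] t K0 unfolding K_def[symmetric] by (intro mult_mono) auto
    also have "\<dots> < e" using e K0 by (simp add: \<delta>_def field_simps)
    finally show "cmod (T b x * T b' x - T b x * T b'' x) < e" .
  qed
qed

lemma appr_net_mult:
  assumes "\<forall>k<h1. goodp (B1 k)" "\<forall>k<h2. goodp (B2 k)"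
  shows "appr M (\<lambda>x. cauchynet h1 B1 c1 x * cauchynet h2 B2 c2 x)"
proof -
  have eq: "cauchynet h1 B1 c1 x * cauchynet h2 B2 c2 x
      = (\<Sum>k<h1. \<Sum>l<h2. (c1 k * c2 l) * (T (B1 k) x * T (B2 l) x))" for x
    by (simp add: cauchynet_T sum_product mult_ac)
  have "appr M (\<lambda>x. \<Sum>k<h1. \<Sum>l<h2. (c1 k * c2 l) * (T (B1 k) x * T (B2 l) x))"
    using assms by (auto intro!: appr_sum appr_scale appr_prodT)
  then show ?thesis by (simp add: eq)
qed

lemma appr_mult:
  assumes f: "appr M f" and g: "appr M g" and bf: "bounded (f ` M)" and bg: "bounded (g ` M)"
  shows "appr M (\<lambda>x. f x * g x)"
proof (rule appr_limit)
  fix e :: real assume e: "e > 0"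
  obtain F where F: "F > 0" "\<forall>x\<in>M. cmod (f x) \<le> F" using bf by (auto simp: bounded_pos)
  obtain G where G: "G > 0" "\<forall>x\<in>M. cmod (g x) \<le> G" using bg by (auto simp: bounded_pos)
  define \<delta> where "\<delta> = min 1 (e / (F + G + 2))"
  have \<delta>0: "\<delta> > 0" using e F G by (simp add: \<delta>_def)
  obtain h1 B1 c1 where 1: "\<forall>k<h1. goodp (B1 k)" "\<forall>x\<in>M. cmod (f x - cauchynet h1 B1 c1 x) < \<delta>"
    using f \<delta>0 unfolding appr_def by meson
  obtain h2 B2 c2 where 2: "\<forall>k<h2. goodp (B2 k)" "\<forall>x\<in>M. cmod (g x - cauchynet h2 B2 c2 x) < \<delta>"
    using g \<delta>0 unfolding appr_def by meson
  show "\<exists>g'. appr M g' \<and> (\<forall>x\<in>M. cmod (f x * g x - g' x) < e)"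
  proof (intro exI conjI ballI)
    show "appr M (\<lambda>x. cauchynet h1 B1 c1 x * cauchynet h2 B2 c2 x)"
      by (rule appr_net_mult[OF 1(1) 2(1)])
  next
    fix x assume x: "x \<in> M"
    let ?N1 = "cauchynet h1 B1 c1 x" and ?N2 = "cauchynet h2 B2 c2 x"
    have n2: "cmod ?N2 \<le> G + 1"
      using 2(2) x G(2) \<delta>_def norm_triangle_ineq2[of ?N2 "g x"]
      by (smt (verit, ccfv_SIG) norm_minus_commute)
    have "f x * g x - ?N1 * ?N2 = f x * (g x - ?N2) + ?N2 * (f x - ?N1)"
      by (simp add: algebra_simps)
    then have "cmod (f x * g x - ?N1 * ?N2) \<le> cmod (f x) * cmod (g x - ?N2) + cmod ?N2 * cmod (f x - ?N1)"
      by (metis norm_mult norm_triangle_ineq)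
    also have "\<dots> \<le> F * \<delta> + (G + 1) * \<delta>"
      using 1(2) 2(2) x F G n2 by (intro add_mono mult_mono) auto
    also have "\<dots> = (F + G + 1) * \<delta>" by (simp add: algebra_simps)
    also have "\<dots> \<le> (F + G + 1) * (e / (F + G + 2))"
      using F G by (intro mult_left_mono) (auto simp: \<delta>_def)
    also have "\<dots> < e" using e F G by (simp add: field_simps)
    finally show "cmod (f x * g x - ?N1 * ?N2) < e" .
  qed
qed


lemma appr_one:
  fixes M :: "(real^'n::finite) set"
  assumes "bounded M" shows "appr M (\<lambda>x. 1)"
proof (rule appr_limit)
  fix e :: real assume e: "e > 0"
  obtain Bd where Bd: "Bd > 0" "\<forall>x\<in>M. norm x \<le> Bd" using assms by (auto simp: bounded_pos)
  define s where "s = real CARD('n) * Bd / e + 1"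
  have s0: "s > 0" using e Bd by (simp add: s_def add_nonneg_pos)
  define b :: "'n \<Rightarrow> complex" where "b = (\<lambda>i. \<i> * of_real s)"
  have gb: "goodp b" using s0 by (simp add: goodp_def b_def)
  show "\<exists>g'. appr M g' \<and> (\<forall>x\<in>M. cmod (1 - g' x) < e)"
  proof (intro exI conjI ballI)
    show "appr M (\<lambda>x. (\<Prod>i\<in>UNIV. b i) * T b x)" by (rule appr_T[OF gb])
  next
    fix x assume x: "x \<in> M"
    define w where "w i = b i * inverse (b i - complex_of_real (x $ i))" for i
    have nz: "b i - complex_of_real (x $ i) \<noteq> 0" for i using good_nz[OF gb] by simp
    have cm: "s \<le> cmod (b i - complex_of_real (x $ i))" for i
      using abs_Im_le_cmod[of "b i - complex_of_real (x $ i)"] s0 by (simp add: b_def)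
    have prodw: "(\<Prod>i\<in>UNIV. b i) * T b x = prod w UNIV"
      by (simp add: T_def w_def prod.distrib)
    have wn: "norm (w i) \<le> 1" for i
    proof -
      have "norm (w i) = s / cmod (b i - complex_of_real (x $ i))"
        using s0 by (simp add: w_def norm_mult norm_inverse b_def divide_inverse)
      also have "\<dots> \<le> 1" using cm[of i] s0 by (simp add: divide_le_eq_1)
      finally show ?thesis .
    qed
    have "cmod (1 - prod w UNIV) = cmod ((\<Prod>i\<in>(UNIV::'n set). (1::complex)) - prod w UNIV)" by simp
    also have "\<dots> \<le> (\<Sum>i\<in>UNIV. cmod (1 - w i))"
      by (rule norm_prod_diff) (use wn in auto)
    also have "\<dots> \<le> (\<Sum>i\<in>(UNIV::'n set). Bd / s)"
    proof (rule sum_mono)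
      fix i
      have "1 - w i = - complex_of_real (x $ i) * inverse (b i - complex_of_real (x $ i))"
        using nz[of i] by (simp add: w_def field_simps)
      then have "cmod (1 - w i) = \<bar>x $ i\<bar> / cmod (b i - complex_of_real (x $ i))"
        by (simp add: norm_mult norm_inverse divide_inverse)
      also have "\<dots> \<le> Bd / s"
        using cm[of i] s0 component_le_norm_cart[of x i] Bd x
        by (intro frac_le) auto
      finally show "cmod (1 - w i) \<le> Bd / s" .
    qed
    also have "\<dots> = real CARD('n) * Bd / s" by simp
    also have "\<dots> < e"
    proof -
      have "real CARD('n) * Bd < e * s" using e by (simp add: s_def field_simps)
      then show ?thesis using s0 by (simp add: divide_less_eq)
    qed
    finally show "cmod (1 - (\<Prod>i\<in>UNIV. b i) * T b x) < e" by (simp add: prodw)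
  qed
qed

lemma appr_const: "bounded M \<Longrightarrow> appr M (\<lambda>x. a)"
  using appr_scale[OF appr_one, of M a] by simp

lemma T_cont: "goodp b \<Longrightarrow> continuous_on M (T b)"
  unfolding T_def
  by (intro continuous_intros) (metis good_nz right_minus_eq)

lemma T_cnj: "T (\<lambda>i. cnj (b i)) x = cnj (T b x)"
  by (simp add: T_def cnj_prod)

lemma good_cnj: "goodp b \<Longrightarrow> goodp (\<lambda>i. cnj (b i))"
  by (simp add: goodp_def)

lemma appr_Re: assumes "goodp b" shows "appr M (\<lambda>x. complex_of_real (Re (T b x)))"
proof -
  have "appr M (\<lambda>x. (1/2) * T b x + (1/2) * T (\<lambda>i. cnj (b i)) x)"
    by (intro appr_add appr_T assms good_cnj)
  moreover have "(1/2) * T b x + (1/2) * T (\<lambda>i. cnj (b i)) x = complex_of_real (Re (T b x))" for x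
    using complex_add_cnj[of "T b x"] by (simp add: T_cnj field_simps)
  ultimately show ?thesis by simp
qed

lemma appr_Im: assumes "goodp b" shows "appr M (\<lambda>x. complex_of_real (Im (T b x)))"
proof -
  have "appr M (\<lambda>x. (1/(2*\<i>)) * T b x + (-1/(2*\<i>)) * T (\<lambda>i. cnj (b i)) x)"
    by (intro appr_add appr_T assms good_cnj)
  moreover have "(1/(2*\<i>)) * T b x + (-1/(2*\<i>)) * T (\<lambda>i. cnj (b i)) x = complex_of_real (Im (T b x))" for x
    using complex_diff_cnj[of "T b x"] by (simp add: T_cnj field_simps)
  ultimately show ?thesis by simp
qed


lemma sep_T:
  fixes x y :: "real^'n::finite"
  assumes "x \<noteq> y"
  shows "\<exists>b. goodp b \<and> T b x \<noteq> T b y"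
proof -
  obtain i0 where i0: "x $ i0 \<noteq> y $ i0" using assms by (auto simp: vec_eq_iff)
  define bs where "bs s = (\<lambda>i. if i = i0 then complex_of_real s + \<i> else \<i>)" for s :: real
  have g: "goodp (bs s)" for s by (simp add: goodp_def bs_def)
  define A where "A z = (\<Prod>i\<in>UNIV - {i0}. inverse (\<i> - complex_of_real (z $ i)))" for z :: "real^'n"
  have Anz: "A z \<noteq> 0" for z
  proof -
    have "\<i> - complex_of_real r \<noteq> 0" for r
    proof
      assume "\<i> - complex_of_real r = 0"
      then have "Im (\<i> - complex_of_real r) = 0" by simp
      then show False by simp
    qed
    then show ?thesis by (simp add: A_def)
  qed
  have Tbs: "T (bs s) z = inverse (complex_of_real s + \<i> - complex_of_real (z $ i0)) * A z" for s z
  proof -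
    have "T (bs s) z = inverse (bs s i0 - complex_of_real (z $ i0)) *
        (\<Prod>i\<in>UNIV - {i0}. inverse (bs s i - complex_of_real (z $ i)))"
      unfolding T_def by (rule prod.remove) auto
    also have "(\<Prod>i\<in>UNIV - {i0}. inverse (bs s i - complex_of_real (z $ i))) = A z"
      unfolding A_def by (rule prod.cong) (auto simp: bs_def)
    finally show ?thesis by (simp add: bs_def)
  qed
  show ?thesis
  proof (rule ccontr)
    assume "\<not> ?thesis"
    then have e0: "T (bs 0) x = T (bs 0) y" and e1: "T (bs 1) x = T (bs 1) y" using g by auto
    define u where "u = complex_of_real (x $ i0)"
    define v where "v = complex_of_real (y $ i0)"
    define P where "P = A x"
    define Q where "Q = A y"
    have nz: "complex_of_real s + \<i> - complex_of_real r \<noteq> 0" for s r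
    proof
      assume "complex_of_real s + \<i> - complex_of_real r = 0"
      then have "Im (complex_of_real s + \<i> - complex_of_real r) = 0" by simp
      then show False by simp
    qed
    have n0: "\<i> - u \<noteq> 0" "\<i> - v \<noteq> 0" using nz[of 0] by (auto simp: u_def v_def)
    have n1: "1 + \<i> - u \<noteq> 0" "1 + \<i> - v \<noteq> 0" using nz[of 1] by (auto simp: u_def v_def)
    have a0: "inverse (\<i> - u) * P = inverse (\<i> - v) * Q"
      using e0 unfolding Tbs by (simp add: u_def v_def P_def Q_def)
    have a1: "inverse (1 + \<i> - u) * P = inverse (1 + \<i> - v) * Q"
      using e1 unfolding Tbs by (simp add: u_def v_def P_def Q_def)
    have b0: "P * (\<i> - v) = Q * (\<i> - u)" using a0 n0 by (simp add: field_simps)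
    have b1: "P * (1 + \<i> - v) = Q * (1 + \<i> - u)" using a1 n1 by (simp add: field_simps)
    have "P = Q" using b0 b1 by (simp add: algebra_simps)
    then have "P * (\<i> - v) = P * (\<i> - u)" using b0 by simp
    then have "u = v" using Anz[of x] by (simp add: P_def)
    then show False using i0 by (simp add: u_def v_def)
  qed
qed


theorem theorem3:
  fixes Mi :: "'n::finite \<Rightarrow> real set"
    and Ui :: "'n \<Rightarrow> complex set"
    and M :: "(real^'n) set"
    and f :: "real^'n \<Rightarrow> real"
    and \<epsilon> :: real
  assumes M_def: "M = {x. \<forall>i. x $ i \<in> Mi i}"
    and M_compact: "compact M"
    and U_open: "\<And>i. open (Ui i)"
    and U_connected: "\<And>i. connected (Ui i)"
    and U_symm: "\<And>i z. z \<in> Ui i \<Longrightarrow> cnj z \<in> Ui i"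
    and M_sub_U: "\<And>x i. x \<in> M \<Longrightarrow> complex_of_real (x $ i) \<in> Ui i"
    and f_cont: "continuous_on M f"
    and eps: "\<epsilon> > 0"
  shows "\<exists>h::nat. h \<ge> 1 \<and> (\<exists>(B :: nat \<Rightarrow> 'n \<Rightarrow> complex) (c :: nat \<Rightarrow> complex).
           cauchynet_admissible h B M \<and>
           (\<forall>x\<in>M. cmod (complex_of_real (f x) - cauchynet h B c x) < \<epsilon>))"
proof -
  define R where "R = {r. continuous_on M r \<and> appr M (\<lambda>x. complex_of_real (r x))}"
  have bM: "bounded M" using M_compact by (rule compact_imp_bounded)
  have bnd: "bounded ((\<lambda>x. complex_of_real (r x)) ` M)" if "continuous_on M r" for r
  proof -
    have "continuous_on M (\<lambda>x. complex_of_real (r x))" using that by (intro continuous_intros)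
    then show ?thesis by (intro compact_imp_bounded compact_continuous_image M_compact)
  qed
  interpret function_ring_on R M
  proof
    show "compact M" by (rule M_compact)
  next
    fix r assume "r \<in> R" then show "continuous_on M r" by (simp add: R_def)
  next
    fix r g assume r: "r \<in> R" and g: "g \<in> R"
    have "appr M (\<lambda>x. complex_of_real (r x) + complex_of_real (g x))"
      using r g by (intro appr_add) (auto simp: R_def)
    moreover have "continuous_on M (\<lambda>x. r x + g x)"
      using r g by (intro continuous_on_add) (auto simp: R_def)
    ultimately show "(\<lambda>x. r x + g x) \<in> R" by (simp add: R_def)
  next
    fix r g assume r: "r \<in> R" and g: "g \<in> R"
    have "appr M (\<lambda>x. complex_of_real (r x) * complex_of_real (g x))"
      using r g by (intro appr_mult bnd) (auto simp: R_def)
    moreover have "continuous_on M (\<lambda>x. r x * g x)"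
      using r g by (intro continuous_on_mult) (auto simp: R_def)
    ultimately show "(\<lambda>x. r x * g x) \<in> R" by (simp add: R_def)
  next
    fix c :: real
    show "(\<lambda>_. c) \<in> R" by (simp add: R_def appr_const[OF bM])
  next
    fix x y assume x: "x \<in> M" and y: "y \<in> M" and xy: "x \<noteq> y"
    obtain b where b: "goodp b" "T b x \<noteq> T b y" using sep_T[OF xy] by blast
    have c: "continuous_on M (T b)" by (rule T_cont[OF b(1)])
    show "\<exists>r\<in>R. r x \<noteq> r y"
    proof (cases "Re (T b x) = Re (T b y)")
      case True
      then have "Im (T b x) \<noteq> Im (T b y)" using b(2) complex_eqI by blast
      moreover have "(\<lambda>z. Im (T b z)) \<in> R"
        using appr_Im[OF b(1)] continuous_on_Im[OF c] by (simp add: R_def)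
      ultimately show ?thesis by (intro bexI[where x="\<lambda>z. Im (T b z)"]) simp_all
    next
      case False
      moreover have "(\<lambda>z. Re (T b z)) \<in> R"
        using appr_Re[OF b(1)] continuous_on_Re[OF c] by (simp add: R_def)
      ultimately show ?thesis by (intro bexI[where x="\<lambda>z. Re (T b z)"]) simp_all
    qed
  qed
  have e2: "\<epsilon> / 2 > 0" using eps by simp
  obtain r where r: "r \<in> R" "\<forall>x\<in>M. \<bar>f x - r x\<bar> < \<epsilon> / 2"
    using Stone_Weierstrass_basic[OF f_cont e2] by blast
  obtain h B c where hBc: "\<forall>k<h. goodp (B k)"
      "\<forall>x\<in>M. cmod (complex_of_real (r x) - cauchynet h B c x) < \<epsilon> / 2"
  proof -
    have "appr M (\<lambda>x. complex_of_real (r x))" using r(1) by (simp add: R_def)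
    then show ?thesis using e2 that unfolding appr_def by meson
  qed
  define B' where "B' = B(h := (\<lambda>_. \<i>))"
  define c' where "c' = c(h := 0)"
  have net: "cauchynet (Suc h) B' c' x = cauchynet h B c x" for x
    unfolding cauchynet_def B'_def c'_def by (simp add: lessThan_Suc)
  show ?thesis
  proof (intro exI conjI)
    show "1 \<le> Suc h" by simp
    show "cauchynet_admissible (Suc h) B' M"
      unfolding cauchynet_admissible_def
    proof (intro ballI allI impI)
      fix x k i assume "x \<in> M" "k < Suc h"
      show "B' k i - complex_of_real (x $ i) \<noteq> 0"
      proof (cases "k = h")
        case True
        show ?thesis
        proof
          assume "B' k i - complex_of_real (x $ i) = 0"
          then have "Im (B' k i - complex_of_real (x $ i)) = 0" by simp
          then show False using True by (simp add: B'_def)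
        qed
      next
        case False
        then have "k < h" using \<open>k < Suc h\<close> by simp
        then have "goodp (B k)" using hBc(1) by blast
        then show ?thesis using False good_nz[of "B k" i "x $ i"] by (simp add: B'_def)
      qed
    qed
    show "\<forall>x\<in>M. cmod (complex_of_real (f x) - cauchynet (Suc h) B' c' x) < \<epsilon>"
    proof
      fix x assume x: "x \<in> M"
      have "cmod (complex_of_real (f x) - cauchynet h B c x)
          \<le> cmod (complex_of_real (f x) - complex_of_real (r x)) + cmod (complex_of_real (r x) - cauchynet h B c x)"
        using norm_triangle_ineq[of "complex_of_real (f x) - complex_of_real (r x)"
            "complex_of_real (r x) - cauchynet h B c x"] by simp
      also have "cmod (complex_of_real (f x) - complex_of_real (r x)) = \<bar>f x - r x\<bar>"
        by (metis norm_of_real of_real_diff)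
      finally have "cmod (complex_of_real (f x) - cauchynet h B c x)
          \<le> \<bar>f x - r x\<bar> + cmod (complex_of_real (r x) - cauchynet h B c x)" .
      moreover have "\<bar>f x - r x\<bar> < \<epsilon> / 2" using r(2) x by blast
      moreover have "cmod (complex_of_real (r x) - cauchynet h B c x) < \<epsilon> / 2" using hBc(2) x by blast
      ultimately show "cmod (complex_of_real (f x) - cauchynet (Suc h) B' c' x) < \<epsilon>"
        unfolding net by linarith
    qed
  qed
qed

end
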